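(* Let $X$ be compact and $a\in\mathrm{H}^1(X;A)$, and assume $S_a$ is non-empty. Then for any $\alpha_1,\alpha_2\in S_a$, any $\widehat g\in\widehat G_a$, any $x\in X$ and any $p(\widehat g)$-invariant Borel probability measure $\mu$ on $X$, one has $\widehat{\mathrm{rot}}_{x,\alpha_1}(\widehat g)=\widehat{\mathrm{rot}}_{x,\alpha_2}(\widehat g)$ (whenever these are defined) and $\widehat{\mathrm{rot}}_{\mu,\alpha_1}(\widehat g)=\widehat{\mathrm{rot}}_{\mu,\alpha_2}(\widehat g)$; that is, the local and mean translation numbers do not depend on the choice of $\alpha\in S_a$.
   Context: $A$ is $\mathbb{Z}$ or the discrete group $\mathbb{R}$. $X$ is a path-connected space, $a\in\mathrm{H}^1(X;A)$, $\pi\colon\widehat X_a\to X$ a principal $A$-bundle with holonomy $a$, $T_r$ the action of $r\in A$. $\widehat G_a$ is the group of homeomorphisms $\widehat g$ of $\widehat X_a$ with $\pi\circ\widehat g=g\circ\pi$ for a homeomorphism $g=p(\widehat g)$ of $X$. A real singular $1$-cocycle $\alpha$ representing $a$ is standard if there is a continuous $\theta\colon\widehat X_a\to\mathbb{R}$ with $d\theta=\pi^*\alpha$ and $\theta(T_r\widehat y)=\theta(\widehat y)+r$ for all $\widehat y, r$; $S_a$ is the set of standard cocycles representing $a$. For such $\alpha$ and $x\in X$, $\rho_{x,\alpha}(\widehat g)=\theta(\widehat g(\widehat x))-\theta(\widehat x)$ with $\widehat x\in\pi^{-1}(x)$ (this does not depend on the choice of $\widehat x$ nor of any $0$-cochain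 $\theta$ with $d\theta=\pi^*\alpha$ and $\theta(T_r\widehat y)=\theta(\widehat y)+r$); $\widehat{\mathrm{rot}}_{x,\alpha}(\widehat g)=\lim_{n\to\infty}\rho_{x,\alpha}(\widehat g^n)/n$ when it exists; for a $p(\widehat g)$-invariant Borel probability measure $\mu$, $\widehat{\mathrm{rot}}_{\mu,\alpha}(\widehat g)=\int_X\rho_{x,\alpha}(\widehat g)\,d\mu(x)$. *)

theory Defs
  imports "HOL-Probability.Probability" "HOL-Homology.Homology"
begin

definition vtx0 :: "nat \<Rightarrow> real" where "vtx0 = (\<lambda>i. if i = 0 then 1 else 0)"
definition vtx1 :: "nat \<Rightarrow> real" where "vtx1 = (\<lambda>i. if i = 1 then 1 else 0)"

text \<open>The coefficient group A is a subgroup of the reals: either the integers or all of R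
  (with the discrete topology).\<close>
definition principal_bundle ::
  "real set \<Rightarrow> 'a topology \<Rightarrow> 'b topology \<Rightarrow> ('b \<Rightarrow> 'a) \<Rightarrow> (real \<Rightarrow> 'b \<Rightarrow> 'b) \<Rightarrow> bool" where
  "principal_bundle A X Xh \<pi> T \<longleftrightarrow>
     continuous_map Xh X \<pi> \<and>
     (\<forall>r\<in>A. homeomorphic_map Xh Xh (T r)) \<and>
     (\<forall>y\<in>topspace Xh. T 0 y = y) \<and>
     (\<forall>r\<in>A. \<forall>s\<in>A. \<forall>y\<in>topspace Xh. T (r + s) y = T r (T s y)) \<and>
     (\<forall>r\<in>A. \<forall>y\<in>topspace Xh. \<pi> (T r y) = \<pi> y) \<and>
     (\<forall>x\<in>topspace X. \<exists>U. openin X U \<and> x \<in> U \<and>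
        (\<exists>\<phi>. homeomorphic_map (subtopology Xh {y\<in>topspace Xh. \<pi> y \<in> U})
                 (prod_topology (subtopology X U) (discrete_topology A)) \<phi> \<and>
             (\<forall>y\<in>topspace Xh. \<pi> y \<in> U \<longrightarrow> fst (\<phi> y) = \<pi> y \<and>
                 (\<forall>r\<in>A. \<phi> (T r y) = (fst (\<phi> y), snd (\<phi> y) + r)))))"

definition singular_1cocycle :: "'a topology \<Rightarrow> (((nat \<Rightarrow> real) \<Rightarrow> 'a) \<Rightarrow> real) \<Rightarrow> bool" where
  "singular_1cocycle X \<alpha> \<longleftrightarrow>
     (\<forall>\<tau>. singular_simplex 2 X \<tau> \<longrightarrow>
        \<alpha> (singular_face 2 0 \<tau>) - \<alpha> (singular_face 2 1 \<tau>) + \<alpha> (singular_face 2 2 \<tau>) = 0)"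

text \<open>The class a in H^1(X;A) is the holonomy of the bundle; a real cocycle represents a
  iff its value on every loop (closed singular 1-simplex) is the holonomy along it, i.e.
  the r such that a lift of the loop ends at T r of its starting point.\<close>
definition represents_holonomy ::
  "real set \<Rightarrow> 'a topology \<Rightarrow> 'b topology \<Rightarrow> ('b \<Rightarrow> 'a) \<Rightarrow> (real \<Rightarrow> 'b \<Rightarrow> 'b)
   \<Rightarrow> (((nat \<Rightarrow> real) \<Rightarrow> 'a) \<Rightarrow> real) \<Rightarrow> bool" where
  "represents_holonomy A X Xh \<pi> T \<alpha> \<longleftrightarrow>
     singular_1cocycle X \<alpha> \<and>
     (\<forall>\<gamma> \<gamma>h r. singular_simplex 1 X \<gamma> \<and> \<gamma> vtx0 = \<gamma> vtx1 \<and>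
        singular_simplex 1 Xh \<gamma>h \<and> (\<forall>t\<in>standard_simplex 1. \<pi> (\<gamma>h t) = \<gamma> t) \<and>
        r \<in> A \<and> \<gamma>h vtx1 = T r (\<gamma>h vtx0) \<longrightarrow> \<alpha> \<gamma> = r)"

definition standard_potential ::
  "real set \<Rightarrow> 'a topology \<Rightarrow> 'b topology \<Rightarrow> ('b \<Rightarrow> 'a) \<Rightarrow> (real \<Rightarrow> 'b \<Rightarrow> 'b)
   \<Rightarrow> (((nat \<Rightarrow> real) \<Rightarrow> 'a) \<Rightarrow> real) \<Rightarrow> ('b \<Rightarrow> real) \<Rightarrow> bool" where
  "standard_potential A X Xh \<pi> T \<alpha> \<theta> \<longleftrightarrow>
     continuous_map Xh euclideanreal \<theta> \<and>
     (\<forall>\<sigma>. singular_simplex 1 Xh \<sigma> \<longrightarrow>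
        \<theta> (\<sigma> vtx1) - \<theta> (\<sigma> vtx0) = \<alpha> (restrict (\<pi> \<circ> \<sigma>) (standard_simplex 1))) \<and>
     (\<forall>r\<in>A. \<forall>y\<in>topspace Xh. \<theta> (T r y) = \<theta> y + r)"

definition standard_cocycles ::
  "real set \<Rightarrow> 'a topology \<Rightarrow> 'b topology \<Rightarrow> ('b \<Rightarrow> 'a) \<Rightarrow> (real \<Rightarrow> 'b \<Rightarrow> 'b)
   \<Rightarrow> (((nat \<Rightarrow> real) \<Rightarrow> 'a) \<Rightarrow> real) set" where
  "standard_cocycles A X Xh \<pi> T =
     {\<alpha>. represents_holonomy A X Xh \<pi> T \<alpha> \<and> (\<exists>\<theta>. standard_potential A X Xh \<pi> T \<alpha> \<theta>)}"

definition rho ::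
  "real set \<Rightarrow> 'a topology \<Rightarrow> 'b topology \<Rightarrow> ('b \<Rightarrow> 'a) \<Rightarrow> (real \<Rightarrow> 'b \<Rightarrow> 'b)
   \<Rightarrow> (((nat \<Rightarrow> real) \<Rightarrow> 'a) \<Rightarrow> real) \<Rightarrow> ('b \<Rightarrow> 'b) \<Rightarrow> 'a \<Rightarrow> real" where
  "rho A X Xh \<pi> T \<alpha> gh x =
     (let \<theta> = (SOME \<theta>. standard_potential A X Xh \<pi> T \<alpha> \<theta>);
          xh = (SOME y. y \<in> topspace Xh \<and> \<pi> y = x)
      in \<theta> (gh xh) - \<theta> xh)"

text \<open>Local translation number: limit of rho(gh^n)/n (exists iff the sequence converges).\<close>
definition rot_seq ::
  "real set \<Rightarrow> 'a topology \<Rightarrow> 'b topology \<Rightarrow> ('b \<Rightarrow> 'a) \<Rightarrow> (real \<Rightarrow> 'b \<Rightarrow> 'b)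
   \<Rightarrow> (((nat \<Rightarrow> real) \<Rightarrow> 'a) \<Rightarrow> real) \<Rightarrow> ('b \<Rightarrow> 'b) \<Rightarrow> 'a \<Rightarrow> nat \<Rightarrow> real" where
  "rot_seq A X Xh \<pi> T \<alpha> gh x n = rho A X Xh \<pi> T \<alpha> (gh ^^ n) x / real n"

definition mean_rot ::
  "real set \<Rightarrow> 'a topology \<Rightarrow> 'b topology \<Rightarrow> ('b \<Rightarrow> 'a) \<Rightarrow> (real \<Rightarrow> 'b \<Rightarrow> 'b)
   \<Rightarrow> (((nat \<Rightarrow> real) \<Rightarrow> 'a) \<Rightarrow> real) \<Rightarrow> ('b \<Rightarrow> 'b) \<Rightarrow> 'a measure \<Rightarrow> real" where
  "mean_rot A X Xh \<pi> T \<alpha> gh \<mu> = (\<integral>x. rho A X Xh \<pi> T \<alpha> gh x \<partial>\<mu>)"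

definition lifts_homeo :: "'a topology \<Rightarrow> 'b topology \<Rightarrow> ('b \<Rightarrow> 'a) \<Rightarrow> ('b \<Rightarrow> 'b) \<Rightarrow> ('a \<Rightarrow> 'a) \<Rightarrow> bool" where
  "lifts_homeo X Xh \<pi> gh g \<longleftrightarrow> homeomorphic_map Xh Xh gh \<and> homeomorphic_map X X g \<and>
     (\<forall>y\<in>topspace Xh. \<pi> (gh y) = g (\<pi> y))"

definition borel_of :: "'a topology \<Rightarrow> 'a measure" where
  "borel_of X = sigma (topspace X) {U. openin X U}"

definition invariant_borel_prob :: "'a topology \<Rightarrow> ('a \<Rightarrow> 'a) \<Rightarrow> 'a measure \<Rightarrow> bool" where
  "invariant_borel_prob X g \<mu> \<longleftrightarrow> prob_space \<mu> \<and> sets \<mu> = sets (borel_of X) \<and>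
     g \<in> measurable \<mu> \<mu> \<and> distr \<mu> \<mu> g = \<mu>"

end

theory Submission
  imports Defs
begin

lemma pb_loc:
  assumes "principal_bundle A X Xh \<pi> T"
  shows "\<forall>x\<in>topspace X. \<exists>U. openin X U \<and> x \<in> U \<and>
        (\<exists>\<phi>. homeomorphic_map (subtopology Xh {y\<in>topspace Xh. \<pi> y \<in> U})
                 (prod_topology (subtopology X U) (discrete_topology A)) \<phi> \<and>
             (\<forall>y\<in>topspace Xh. \<pi> y \<in> U \<longrightarrow> fst (\<phi> y) = \<pi> y \<and>
                 (\<forall>r\<in>A. \<phi> (T r y) = (fst (\<phi> y), snd (\<phi> y) + r))))"
  using assms unfolding principal_bundle_def by (elim conjE)

lemma pb_orbit:
  assumes A: "A = \<int> \<or> A = UNIV" and pb: "principal_bundle A X Xh \<pi> T"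
    and y: "y \<in> topspace Xh" and y': "y' \<in> topspace Xh" and eq: "\<pi> y = \<pi> y'"
  shows "\<exists>r\<in>A. y' = T r y"
proof -
  have cm: "continuous_map Xh X \<pi>" using pb unfolding principal_bundle_def by blast
  have x: "\<pi> y \<in> topspace X" using cm y continuous_map_image_subset_topspace by blast
  from pb x obtain U \<phi> where U: "openin X U" "\<pi> y \<in> U"
    and hm: "homeomorphic_map (subtopology Xh {y\<in>topspace Xh. \<pi> y \<in> U})
                 (prod_topology (subtopology X U) (discrete_topology A)) \<phi>"
    and eqv: "\<forall>y\<in>topspace Xh. \<pi> y \<in> U \<longrightarrow> fst (\<phi> y) = \<pi> y \<and>
                 (\<forall>r\<in>A. \<phi> (T r y) = (fst (\<phi> y), snd (\<phi> y) + r))"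
    using pb_loc[OF pb] by blast
  have img: "\<phi> ` topspace (subtopology Xh {y\<in>topspace Xh. \<pi> y \<in> U}) = topspace (prod_topology (subtopology X U) (discrete_topology A))"
    using hm homeomorphic_imp_surjective_map by blast
  have inj: "inj_on \<phi> (topspace (subtopology Xh {y\<in>topspace Xh. \<pi> y \<in> U}))"
    using hm homeomorphic_imp_injective_map by blast
  have ty: "y \<in> topspace (subtopology Xh {y\<in>topspace Xh. \<pi> y \<in> U})" using y U by auto
  have ty': "y' \<in> topspace (subtopology Xh {y\<in>topspace Xh. \<pi> y \<in> U})" using y' U eq by auto
  have "\<phi> y \<in> topspace (prod_topology (subtopology X U) (discrete_topology A))" using img ty by blast
  then have a: "snd (\<phi> y) \<in> A" by (simp add: topspace_prod_topology mem_Times_iff)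
  have "\<phi> y' \<in> topspace (prod_topology (subtopology X U) (discrete_topology A))" using img ty' by blast
  then have b: "snd (\<phi> y') \<in> A" by (simp add: topspace_prod_topology mem_Times_iff)
  define r where "r = snd (\<phi> y') - snd (\<phi> y)"
  have rA: "r \<in> A" using A a b unfolding r_def by (auto simp: Ints_diff)
  have hT: "homeomorphic_map Xh Xh (T r)" using pb rA unfolding principal_bundle_def by blast
  have Ty: "T r y \<in> topspace Xh" using hT y homeomorphic_imp_surjective_map by blast
  have piT: "\<pi> (T r y) = \<pi> y" using pb rA y unfolding principal_bundle_def by blast
  have tTy: "T r y \<in> topspace (subtopology Xh {y\<in>topspace Xh. \<pi> y \<in> U})" using Ty piT U by auto
  have "\<phi> (T r y) = \<phi> y'"
    using eqv y y' U eq rA unfolding r_def by (simp add: prod_eq_iff)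
  then have "T r y = y'" using inj tTy ty' by (meson inj_on_def)
  then show ?thesis using rA by blast
qed

lemma pb_section:
  assumes A: "A = \<int> \<or> A = UNIV" and pb: "principal_bundle A X Xh \<pi> T" and x: "x \<in> topspace X"
  shows "\<exists>U s. openin X U \<and> x \<in> U \<and> continuous_map (subtopology X U) Xh s \<and> (\<forall>u\<in>U. s u \<in> topspace Xh \<and> \<pi> (s u) = u)"
proof -
  from pb x obtain U \<phi> where U: "openin X U" "x \<in> U"
    and hm: "homeomorphic_map (subtopology Xh {y\<in>topspace Xh. \<pi> y \<in> U})
                 (prod_topology (subtopology X U) (discrete_topology A)) \<phi>"
    and eqv: "\<forall>y\<in>topspace Xh. \<pi> y \<in> U \<longrightarrow> fst (\<phi> y) = \<pi> y \<and>
                 (\<forall>r\<in>A. \<phi> (T r y) = (fst (\<phi> y), snd (\<phi> y) + r))"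
    using pb_loc[OF pb] by blast
  have A0: "0 \<in> A" using A by auto
  obtain \<psi> where hms: "homeomorphic_maps (subtopology Xh {y\<in>topspace Xh. \<pi> y \<in> U})
                 (prod_topology (subtopology X U) (discrete_topology A)) \<phi> \<psi>"
    using hm homeomorphic_map_maps by blast
  have c1: "continuous_map (subtopology X U) (prod_topology (subtopology X U) (discrete_topology A)) (\<lambda>u. (u, 0))"
    using A0 by (intro continuous_map_pairedI) (auto simp: continuous_map_const)
  have c2: "continuous_map (prod_topology (subtopology X U) (discrete_topology A)) (subtopology Xh {y\<in>topspace Xh. \<pi> y \<in> U}) \<psi>"
    using hms homeomorphic_maps_def by blast
  define s where "s = (\<lambda>u. \<psi> (u, 0))"
  have cs: "continuous_map (subtopology X U) (subtopology Xh {y\<in>topspace Xh. \<pi> y \<in> U}) s"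
    unfolding s_def using continuous_map_compose[OF c1 c2] by (simp add: o_def)
  have "\<forall>u\<in>U. s u \<in> topspace Xh \<and> \<pi> (s u) = u"
  proof
    fix u assume u: "u \<in> U"
    have uX: "u \<in> topspace X" using U(1) u openin_subset by blast
    have tp: "(u, 0) \<in> topspace (prod_topology (subtopology X U) (discrete_topology A))"
      using u uX A0 by (simp add: topspace_prod_topology)
    have "s u \<in> topspace (subtopology Xh {y\<in>topspace Xh. \<pi> y \<in> U})"
    proof -
      have "u \<in> topspace (subtopology X U)" using u uX by simp
      then show ?thesis using continuous_map_image_subset_topspace[OF cs] by blast
    qed
    moreover have "\<phi> (s u) = (u, 0)" using hms tp unfolding homeomorphic_maps_def s_def by blast
    ultimately show "s u \<in> topspace Xh \<and> \<pi> (s u) = u" using eqv by fastforce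
  qed
  then show ?thesis using U cs continuous_map_into_fulltopology by blast
qed


lemma pb_fibre_nonempty:
  assumes A: "A = \<int> \<or> A = UNIV" and pb: "principal_bundle A X Xh \<pi> T" and x: "x \<in> topspace X"
  shows "(SOME y. y \<in> topspace Xh \<and> \<pi> y = x) \<in> topspace Xh \<and> \<pi> (SOME y. y \<in> topspace Xh \<and> \<pi> y = x) = x"
proof -
  obtain U s where "x \<in> U" "\<forall>u\<in>U. s u \<in> topspace Xh \<and> \<pi> (s u) = u"
    using pb_section[OF A pb x] by blast
  then have "\<exists>y. y \<in> topspace Xh \<and> \<pi> y = x" by blast
  then show ?thesis by (rule someI_ex)
qed

lemma pb_descend:
  assumes A: "A = \<int> \<or> A = UNIV" and pb: "principal_bundle A X Xh \<pi> T"
    and cf: "continuous_map Xh euclideanreal f"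
    and inv: "\<forall>r\<in>A. \<forall>y\<in>topspace Xh. f (T r y) = f y"
  defines "F \<equiv> (\<lambda>u. f (SOME y. y \<in> topspace Xh \<and> \<pi> y = u))"
  shows "(\<forall>y\<in>topspace Xh. f y = F (\<pi> y)) \<and> continuous_map X euclideanreal F"
proof -
  have cm: "continuous_map Xh X \<pi>" using pb unfolding principal_bundle_def by blast
  have fib: "f y = F (\<pi> y)" if y: "y \<in> topspace Xh" for y
  proof -
    have px: "\<pi> y \<in> topspace X" using cm y continuous_map_image_subset_topspace by blast
    define y' where "y' = (SOME y'. y' \<in> topspace Xh \<and> \<pi> y' = \<pi> y)"
    have y': "y' \<in> topspace Xh" "\<pi> y' = \<pi> y" using pb_fibre_nonempty[OF A pb px] unfolding y'_def by auto
    obtain r where r: "r \<in> A" "y' = T r y" using pb_orbit[OF A pb y y'(1) y'(2)[symmetric]] by blast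
    have "F (\<pi> y) = f y'" unfolding F_def y'_def ..
    also have "\<dots> = f y" using r inv y by simp
    finally show ?thesis by simp
  qed
  have "continuous_map X euclideanreal F"
    unfolding continuous_map
  proof (intro conjI allI impI)
    show "F ` topspace X \<subseteq> topspace euclideanreal" by simp
    fix S :: "real set" assume S: "openin euclideanreal S"
    show "openin X {x \<in> topspace X. F x \<in> S}"
    proof (subst openin_subopen, intro ballI)
      fix x assume x: "x \<in> {x \<in> topspace X. F x \<in> S}"
      then obtain U s where U: "openin X U" "x \<in> U" and cs: "continuous_map (subtopology X U) Xh s"
        and s: "\<forall>u\<in>U. s u \<in> topspace Xh \<and> \<pi> (s u) = u"
        using pb_section[OF A pb] by blast
      have Fs: "F u = f (s u)" if "u \<in> U" for u using fib[of "s u"] s that by simp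
      have c: "continuous_map (subtopology X U) euclideanreal (f \<circ> s)"
        using continuous_map_compose[OF cs cf] .
      have "openin (subtopology X U) {u \<in> topspace (subtopology X U). (f \<circ> s) u \<in> S}"
        using c S unfolding continuous_map by blast
      then have o: "openin X {u \<in> topspace (subtopology X U). (f \<circ> s) u \<in> S}"
        using openin_open_subtopology[OF U(1)] by blast
      have eq: "{u \<in> topspace (subtopology X U). (f \<circ> s) u \<in> S} = {u \<in> topspace X. u \<in> U \<and> F u \<in> S}"
        using Fs by auto
      show "\<exists>T. openin X T \<and> x \<in> T \<and> T \<subseteq> {x \<in> topspace X. F x \<in> S}"
        using o eq x U by (intro exI[of _ "{u \<in> topspace X. u \<in> U \<and> F u \<in> S}"]) auto
    qed
  qed
  then show ?thesis using fib by blast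
qed


theorem proposition2p16:
  fixes A :: "real set" and X :: "'a topology" and Xh :: "'b topology"
    and \<pi> :: "'b \<Rightarrow> 'a" and T :: "real \<Rightarrow> 'b \<Rightarrow> 'b"
  assumes "A = \<int> \<or> A = UNIV"
    and "path_connected_space X" and "compact_space X"
    and "principal_bundle A X Xh \<pi> T"
    and "standard_cocycles A X Xh \<pi> T \<noteq> {}"
    and "\<alpha>1 \<in> standard_cocycles A X Xh \<pi> T" and "\<alpha>2 \<in> standard_cocycles A X Xh \<pi> T"
    and "lifts_homeo X Xh \<pi> gh g"
    and "x \<in> topspace X"
    and "invariant_borel_prob X g \<mu>"
  shows "(\<forall>L. (rot_seq A X Xh \<pi> T \<alpha>1 gh x \<longlonglongrightarrow> L) \<longleftrightarrow> (rot_seq A X Xh \<pi> T \<alpha>2 gh x \<longlonglongrightarrow> L))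
       \<and> mean_rot A X Xh \<pi> T \<alpha>1 gh \<mu> = mean_rot A X Xh \<pi> T \<alpha>2 gh \<mu>"
proof -
  note A = assms(1) and pb = assms(4)
  have cm: "continuous_map Xh X \<pi>" using pb unfolding principal_bundle_def by blast
  define \<theta>1 where "\<theta>1 = (SOME \<theta>. standard_potential A X Xh \<pi> T \<alpha>1 \<theta>)"
  define \<theta>2 where "\<theta>2 = (SOME \<theta>. standard_potential A X Xh \<pi> T \<alpha>2 \<theta>)"
  have sp1: "standard_potential A X Xh \<pi> T \<alpha>1 \<theta>1"
    using assms(6) unfolding standard_cocycles_def \<theta>1_def by (simp add: someI_ex)
  have sp2: "standard_potential A X Xh \<pi> T \<alpha>2 \<theta>2"
    using assms(7) unfolding standard_cocycles_def \<theta>2_def by (simp add: someI_ex)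
  define f where "f = (\<lambda>y. \<theta>1 y - \<theta>2 y)"
  have cf: "continuous_map Xh euclideanreal f"
    using sp1 sp2 unfolding f_def standard_potential_def by (intro continuous_map_diff) auto
  have inv: "\<forall>r\<in>A. \<forall>y\<in>topspace Xh. f (T r y) = f y"
    using sp1 sp2 unfolding f_def standard_potential_def by auto
  define F where "F = (\<lambda>u. f (SOME y. y \<in> topspace Xh \<and> \<pi> y = u))"
  have fib: "\<forall>y\<in>topspace Xh. f y = F (\<pi> y)" and cF: "continuous_map X euclideanreal F"
    using pb_descend[OF A pb cf inv] unfolding F_def by auto
  have "compactin euclideanreal (F ` topspace X)"
    using image_compactin[OF _ cF] assms(3) compact_space_def by blast
  then have "bounded (F ` topspace X)" using compact_imp_bounded compactin_euclidean_iff by blast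
  then obtain B where B: "\<And>u. u \<in> topspace X \<Longrightarrow> \<bar>F u\<bar> \<le> B"
    unfolding bounded_iff by auto
  define yh where "yh = (\<lambda>u. SOME y. y \<in> topspace Xh \<and> \<pi> y = u)"
  have yh: "yh u \<in> topspace Xh" "\<pi> (yh u) = u" if "u \<in> topspace X" for u
    using pb_fibre_nonempty[OF A pb that] unfolding yh_def by auto
  have key: "rho A X Xh \<pi> T \<alpha>1 k u - rho A X Xh \<pi> T \<alpha>2 k u = F (\<pi> (k (yh u))) - F u"
    if u: "u \<in> topspace X" and k: "k (yh u) \<in> topspace Xh" for k u
  proof -
    have "rho A X Xh \<pi> T \<alpha>1 k u - rho A X Xh \<pi> T \<alpha>2 k u = f (k (yh u)) - f (yh u)"
      unfolding rho_def Let_def \<theta>1_def[symmetric] \<theta>2_def[symmetric] f_def yh_def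
      by simp
    also have "\<dots> = F (\<pi> (k (yh u))) - F u" using fib k yh[OF u] by auto
    finally show ?thesis .
  qed
  have ghX: "gh y \<in> topspace Xh" if "y \<in> topspace Xh" for y
    using assms(8) that homeomorphic_imp_surjective_map unfolding lifts_homeo_def by blast
  have ghn: "(gh ^^ n) y \<in> topspace Xh" if "y \<in> topspace Xh" for y n
    by (induction n) (auto simp: that ghX)
  define D where "D = (\<lambda>n. rot_seq A X Xh \<pi> T \<alpha>1 gh x n - rot_seq A X Xh \<pi> T \<alpha>2 gh x n)"
  have D0: "D \<longlonglongrightarrow> 0"
  proof (rule Lim_null_comparison)
    show "(\<lambda>n. (2 * B) / real n) \<longlonglongrightarrow> 0" by (rule lim_const_over_n)
    show "\<forall>\<^sub>F n in sequentially. norm (D n) \<le> 2 * B / real n"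
    proof (intro always_eventually allI)
      fix n
      have p: "\<pi> ((gh ^^ n) (yh x)) \<in> topspace X"
        using cm ghn[OF yh(1)[OF assms(9)]] continuous_map_image_subset_topspace by blast
      have "D n = (F (\<pi> ((gh ^^ n) (yh x))) - F x) / real n"
        unfolding D_def rot_seq_def using key[of x "gh ^^ n", OF assms(9) ghn[OF yh(1)[OF assms(9)]]]
        by (metis diff_divide_distrib)
      moreover have "\<bar>F (\<pi> ((gh ^^ n) (yh x))) - F x\<bar> \<le> 2 * B" using B[OF p] B[OF assms(9)] by linarith
      ultimately show "norm (D n) \<le> 2 * B / real n"
        by (simp add: abs_divide divide_right_mono)
    qed
  qed
  have part1: "\<forall>L. (rot_seq A X Xh \<pi> T \<alpha>1 gh x \<longlonglongrightarrow> L) \<longleftrightarrow> (rot_seq A X Xh \<pi> T \<alpha>2 gh x \<longlonglongrightarrow> L)"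
  proof (intro allI iffI)
    fix L assume "rot_seq A X Xh \<pi> T \<alpha>1 gh x \<longlonglongrightarrow> L"
    from tendsto_diff[OF this D0] show "rot_seq A X Xh \<pi> T \<alpha>2 gh x \<longlonglongrightarrow> L" by (simp add: D_def)
  next
    fix L assume "rot_seq A X Xh \<pi> T \<alpha>2 gh x \<longlonglongrightarrow> L"
    from tendsto_add[OF this D0] show "rot_seq A X Xh \<pi> T \<alpha>1 gh x \<longlonglongrightarrow> L" by (simp add: D_def)
  qed
  have ip: "invariant_borel_prob X g \<mu>" by fact
  then have ps: "prob_space \<mu>" and sets: "sets \<mu> = sets (borel_of X)"
    and gm: "g \<in> measurable \<mu> \<mu>" and dg: "distr \<mu> \<mu> g = \<mu>"
    unfolding invariant_borel_prob_def by auto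
  have Psub: "{U. openin X U} \<subseteq> Pow (topspace X)" using openin_subset by blast
  have space: "space \<mu> = topspace X"
    using sets_eq_imp_space_eq[OF sets] unfolding borel_of_def using space_measure_of[OF Psub] by simp
  have Fm: "F \<in> borel_measurable \<mu>"
  proof (rule borel_measurableI)
    fix S :: "real set" assume "open S"
    then have "openin X {u \<in> topspace X. F u \<in> S}" using cF unfolding continuous_map by simp
    then have "{u \<in> topspace X. F u \<in> S} \<in> sigma_sets (topspace X) {U. openin X U}" by auto
    moreover have "F -` S \<inter> space \<mu> = {u \<in> topspace X. F u \<in> S}" using space by auto
    ultimately show "F -` S \<inter> space \<mu> \<in> sets \<mu>"
      using sets unfolding borel_of_def sets_measure_of[OF Psub] by simp
  qed
  interpret prob_space \<mu> by (rule ps)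
  have Fi: "integrable \<mu> F"
  proof (rule integrable_const_bound[where B=B])
    show "AE x in \<mu>. norm (F x) \<le> B" by (rule AE_I2) (simp add: B space)
  qed (rule Fm)
  have Fgm: "(\<lambda>u. F (g u)) \<in> borel_measurable \<mu>" using measurable_compose[OF gm Fm] by (simp add: o_def)
  have gsp: "g u \<in> space \<mu>" if "u \<in> space \<mu>" for u using measurable_space[OF gm that] .
  have Fgi: "integrable \<mu> (\<lambda>u. F (g u))"
  proof (rule integrable_const_bound[where B=B])
    show "AE x in \<mu>. norm (F (g x)) \<le> B"
    proof (rule AE_I2)
      fix x assume "x \<in> space \<mu>"
      then have "g x \<in> topspace X" using gsp space by simp
      then show "norm (F (g x)) \<le> B" using B by simp
    qed
  qed (rule Fgm)
  define h where "h = (\<lambda>u. F (g u) - F u)"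
  have hi: "integrable \<mu> h" unfolding h_def using Fgi Fi by auto
  have h0: "integral\<^sup>L \<mu> h = 0"
  proof -
    have "integral\<^sup>L \<mu> (\<lambda>u. F (g u)) = integral\<^sup>L (distr \<mu> \<mu> g) F"
      using integral_distr[OF gm Fm] by simp
    also have "\<dots> = integral\<^sup>L \<mu> F" using dg by simp
    finally show ?thesis unfolding h_def using Fgi Fi by simp
  qed
  have lift: "\<forall>y\<in>topspace Xh. \<pi> (gh y) = g (\<pi> y)" using assms(8) unfolding lifts_homeo_def by blast
  have pt: "rho A X Xh \<pi> T \<alpha>1 gh u = rho A X Xh \<pi> T \<alpha>2 gh u + h u" if u: "u \<in> space \<mu>" for u
  proof -
    have u': "u \<in> topspace X" using u space by simp
    have "rho A X Xh \<pi> T \<alpha>1 gh u - rho A X Xh \<pi> T \<alpha>2 gh u = F (\<pi> (gh (yh u))) - F u"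
      using key[of u gh, OF u' ghX[OF yh(1)[OF u']]] .
    also have "\<pi> (gh (yh u)) = g u" using lift yh[OF u'] by auto
    finally show ?thesis unfolding h_def by simp
  qed
  have "mean_rot A X Xh \<pi> T \<alpha>1 gh \<mu> = integral\<^sup>L \<mu> (\<lambda>u. rho A X Xh \<pi> T \<alpha>2 gh u + h u)"
    unfolding mean_rot_def by (rule Bochner_Integration.integral_cong[OF refl]) (rule pt)
  also have "\<dots> = mean_rot A X Xh \<pi> T \<alpha>2 gh \<mu>"
  proof (cases "integrable \<mu> (rho A X Xh \<pi> T \<alpha>2 gh)")
    case True
    then show ?thesis unfolding mean_rot_def using hi h0 by simp
  next
    case False
    have "\<not> integrable \<mu> (\<lambda>u. rho A X Xh \<pi> T \<alpha>2 gh u + h u)"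
    proof
      assume "integrable \<mu> (\<lambda>u. rho A X Xh \<pi> T \<alpha>2 gh u + h u)"
      from Bochner_Integration.integrable_diff[OF this hi] have "integrable \<mu> (rho A X Xh \<pi> T \<alpha>2 gh)" by simp
      with False show False ..
    qed
    then show ?thesis unfolding mean_rot_def using False not_integrable_integral_eq by metis
  qed
  finally show ?thesis using part1 by blast
qed

end
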